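(* Let $X$ be a complex vector space equipped with an inner product $\langle\cdot,\cdot\rangle'$. Suppose that for each $\alpha\in(0,1]$ we are given a map $\langle\cdot,\cdot\rangle_\alpha : X\times X\to\mathbb{C}$ and real constants $A_\alpha,B_\alpha$ with $0<A_\alpha\le B_\alpha<\infty$ such that for all $x,y\in X$ and all $\alpha\in(0,1]$, \[ A_\alpha\,|\langle x,y\rangle'| \le |\langle x,y\rangle_\alpha| \le B_\alpha\,|\langle x,y\rangle'|, \] and suppose moreover that $\sup_{\alpha\in(0,1]} B_\alpha/A_\alpha<\infty$. Then there exists $M\in[1,\infty)$ such that for every $\alpha\in(0,1]$, all $x,y,z\in X$ and all $k\in\mathbb{C}$: 1. $\frac{|k|}{M}|\langle x,y\rangle_\alpha|\le|\langle kx,y\rangle_\alpha|\le |k|M|\langle x,y\rangle_\alpha|$; 2. $\frac{|k|}{M}|\langle x,y\rangle_\alpha|\le|\langle x,ky\rangle_\alpha|\le |k|M|\langle x,y\rangle_\alpha|$; 3. $\frac{|k|}{M}|\langle y,x\rangle_\alpha|\le|\langle kx,y\rangle_\alpha|\le |k|M|\langle y,x\rangle_\alpha|$; 4. $\frac{|k|}{M}|\langle y,x\rangle_\alpha|\le|\langle x,ky\rangle_\alpha|\le |k|M|\langle y,x\rangle_\alpha|$; 5. $\frac{1}{M}|\langle x,ky\rangle_\alpha|\le|\langle kx,y\rangle_\alpha|\le M|\langle x,ky\rangle_\alpha|$; 6. $\frac{1}{M}|\langle kx,y\rangle_\alpha|\le|\langle x,ky\rangle_\alpha|\le M|\langle kx,y\rangle_\alpha|$;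 7. $\frac{1}{M}|\langle ky,x\rangle_\alpha|\le|\langle kx,y\rangle_\alpha|\le M|\langle ky,x\rangle_\alpha|$; 8. $\frac{1}{M}|\langle ky,x\rangle_\alpha|\le|\langle x,ky\rangle_\alpha|\le M|\langle ky,x\rangle_\alpha|$; 9. $|\langle kx+z,y\rangle_\alpha|\le M\big(|k|\,|\langle x,y\rangle_\alpha|+|\langle z,y\rangle_\alpha|\big)$; 10. $|\langle x,ky+z\rangle_\alpha|\le M\big(|k|\,|\langle x,y\rangle_\alpha|+|\langle x,z\rangle_\alpha|\big)$.
   Context: The map $\langle\cdot,\cdot\rangle_\alpha$ satisfying the two-sided bound is the paper's (simplified) "fuzzy inner product" relative to the classical inner product $\langle\cdot,\cdot\rangle'$. *)

theory Defs
  imports "HOL-Analysis.Analysis"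
begin

definition complex_inner_product ::
  "(complex \<Rightarrow> 'a::ab_group_add \<Rightarrow> 'a) \<Rightarrow> ('a \<Rightarrow> 'a \<Rightarrow> complex) \<Rightarrow> bool" where
  "complex_inner_product smul ip \<longleftrightarrow>
     (\<forall>x y. ip x y = cnj (ip y x)) \<and>
     (\<forall>x y z. ip (x + z) y = ip x y + ip z y) \<and>
     (\<forall>k x y. ip (smul k x) y = k * ip x y) \<and>
     (\<forall>x. Im (ip x x) = 0 \<and> Re (ip x x) \<ge> 0) \<and>
     (\<forall>x. ip x x = 0 \<longrightarrow> x = 0)"

end

theory Submission
  imports Defs
begin

lemma key_up:
  fixes a b M p q P Q c :: real
  assumes "0 < a" "b \<le> M*a" "a*p \<le> P" "Q \<le> b*q" "q \<le> c*p" "c \<ge> 0" "M \<ge> 1" "p \<ge> 0" "a \<le> b" "q \<ge> 0"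
  shows "Q \<le> c*M*P"
proof -
  have "Q \<le> b*q" by fact
  also have "\<dots> \<le> b*(c*p)" using assms by (intro mult_left_mono) auto
  also have "\<dots> \<le> (M*a)*(c*p)" using assms by (intro mult_right_mono) auto
  also have "\<dots> = (c*M)*(a*p)" by simp
  also have "\<dots> \<le> (c*M)*P" using assms by (intro mult_left_mono) auto
  finally show ?thesis .
qed

lemma key_low:
  fixes a b M p q P Q c :: real
  assumes "0 < a" "b \<le> M*a" "P \<le> b*p" "a*q \<le> Q" "c*p \<le> q" "c \<ge> 0" "M \<ge> 1" "a \<le> b" "q \<ge> 0"
  shows "c/M*P \<le> Q"
proof -
  have "c*P \<le> c*(b*p)" using assms by (intro mult_left_mono) auto
  also have "\<dots> = b*(c*p)" by simp
  also have "\<dots> \<le> b*q" using assms by (intro mult_left_mono) auto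
  also have "\<dots> \<le> (M*a)*q" using assms by (intro mult_right_mono) auto
  also have "\<dots> = M*(a*q)" by simp
  also have "\<dots> \<le> M*Q" using assms by (intro mult_left_mono) auto
  finally have "c*P \<le> M*Q" .
  then show ?thesis using assms by (simp add: field_simps)
qed

lemma key_sum:
  fixes a b M q P1 P2 p1 p2 Q c :: real
  assumes "0 < a" "b \<le> M*a" "a*p1 \<le> P1" "a*p2 \<le> P2" "Q \<le> b*q" "q \<le> c*p1 + p2"
    "c \<ge> 0" "M \<ge> 1" "a \<le> b" "q \<ge> 0"
  shows "Q \<le> M*(c*P1 + P2)"
proof -
  have "Q \<le> b*q" by fact
  also have "\<dots> \<le> b*(c*p1+p2)" using assms by (intro mult_left_mono) auto
  also have "\<dots> \<le> (M*a)*(c*p1+p2)" using assms by (intro mult_right_mono) auto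
  also have "\<dots> = M*(c*(a*p1) + a*p2)" by (simp add: algebra_simps)
  also have "\<dots> \<le> M*(c*P1 + P2)" using assms by (intro mult_left_mono add_mono) auto
  finally show ?thesis .
qed

theorem mainTheorem5:
  fixes smul :: "complex \<Rightarrow> 'a::ab_group_add \<Rightarrow> 'a"
    and ip :: "'a \<Rightarrow> 'a \<Rightarrow> complex"
    and ipa :: "real \<Rightarrow> 'a \<Rightarrow> 'a \<Rightarrow> complex"
    and A B :: "real \<Rightarrow> real"
  assumes vs: "vector_space smul"
    and inner: "complex_inner_product smul ip"
    and AB: "\<forall>\<alpha>\<in>{0<..1}. 0 < A \<alpha> \<and> A \<alpha> \<le> B \<alpha>"
    and bounds: "\<forall>\<alpha>\<in>{0<..1}. \<forall>x y.
        A \<alpha> * cmod (ip x y) \<le> cmod (ipa \<alpha> x y) \<and> cmod (ipa \<alpha> x y) \<le> B \<alpha> * cmod (ip x y)"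
    and sup: "bdd_above ((\<lambda>\<alpha>. B \<alpha> / A \<alpha>) ` {0<..1})"
  shows "\<exists>M::real. M \<ge> 1 \<and> (\<forall>\<alpha>\<in>{0<..1}. \<forall>x y z. \<forall>k::complex.
     (cmod k / M * cmod (ipa \<alpha> x y) \<le> cmod (ipa \<alpha> (smul k x) y) \<and>
        cmod (ipa \<alpha> (smul k x) y) \<le> cmod k * M * cmod (ipa \<alpha> x y)) \<and>
     (cmod k / M * cmod (ipa \<alpha> x y) \<le> cmod (ipa \<alpha> x (smul k y)) \<and>
        cmod (ipa \<alpha> x (smul k y)) \<le> cmod k * M * cmod (ipa \<alpha> x y)) \<and>
     (cmod k / M * cmod (ipa \<alpha> y x) \<le> cmod (ipa \<alpha> (smul k x) y) \<and>
        cmod (ipa \<alpha> (smul k x) y) \<le> cmod k * M * cmod (ipa \<alpha> y x)) \<and>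
     (cmod k / M * cmod (ipa \<alpha> y x) \<le> cmod (ipa \<alpha> x (smul k y)) \<and>
        cmod (ipa \<alpha> x (smul k y)) \<le> cmod k * M * cmod (ipa \<alpha> y x)) \<and>
     (1 / M * cmod (ipa \<alpha> x (smul k y)) \<le> cmod (ipa \<alpha> (smul k x) y) \<and>
        cmod (ipa \<alpha> (smul k x) y) \<le> M * cmod (ipa \<alpha> x (smul k y))) \<and>
     (1 / M * cmod (ipa \<alpha> (smul k x) y) \<le> cmod (ipa \<alpha> x (smul k y)) \<and>
        cmod (ipa \<alpha> x (smul k y)) \<le> M * cmod (ipa \<alpha> (smul k x) y)) \<and>
     (1 / M * cmod (ipa \<alpha> (smul k y) x) \<le> cmod (ipa \<alpha> (smul k x) y) \<and>
        cmod (ipa \<alpha> (smul k x) y) \<le> M * cmod (ipa \<alpha> (smul k y) x)) \<and>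
     (1 / M * cmod (ipa \<alpha> (smul k y) x) \<le> cmod (ipa \<alpha> x (smul k y)) \<and>
        cmod (ipa \<alpha> x (smul k y)) \<le> M * cmod (ipa \<alpha> (smul k y) x)) \<and>
     cmod (ipa \<alpha> (smul k x + z) y) \<le> M * (cmod k * cmod (ipa \<alpha> x y) + cmod (ipa \<alpha> z y)) \<and>
     cmod (ipa \<alpha> x (smul k y + z)) \<le> M * (cmod k * cmod (ipa \<alpha> x y) + cmod (ipa \<alpha> x z)))"
proof -
  define C where "C = (SUP \<alpha>\<in>{0<..1}. B \<alpha> / A \<alpha>)"
  define M where "M = max 1 C"
  have M1: "M \<ge> 1" unfolding M_def by simp
  have cj: "\<And>x y. ip x y = cnj (ip y x)"
    using inner unfolding complex_inner_product_def by blast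
  have add: "\<And>x y z. ip (x + z) y = ip x y + ip z y"
    using inner unfolding complex_inner_product_def by blast
  have sm: "\<And>k x y. ip (smul k x) y = k * ip x y"
    using inner unfolding complex_inner_product_def by blast
  have sym: "\<And>x y. cmod (ip y x) = cmod (ip x y)"
  proof -
    fix x y show "cmod (ip y x) = cmod (ip x y)" using cj[of y x] complex_mod_cnj[of "ip x y"] by (simp only:)
  qed
  have sm1: "\<And>k x y. cmod (ip (smul k x) y) = cmod k * cmod (ip x y)" by (simp only: sm norm_mult)
  have sm2: "\<And>k x y. cmod (ip x (smul k y)) = cmod k * cmod (ip x y)"
  proof -
    fix k x y
    have "cmod (ip x (smul k y)) = cmod (ip (smul k y) x)" by (rule sym)
    also have "\<dots> = cmod k * cmod (ip y x)" by (rule sm1)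
    also have "\<dots> = cmod k * cmod (ip x y)" by (simp only: sym[of y x])
    finally show "cmod (ip x (smul k y)) = cmod k * cmod (ip x y)" .
  qed
  have add1: "\<And>x y z. cmod (ip (x + z) y) \<le> cmod (ip x y) + cmod (ip z y)"
    by (simp only: add norm_triangle_ineq)
  have add2: "\<And>x y z. cmod (ip x (y + z)) \<le> cmod (ip x y) + cmod (ip x z)"
  proof -
    fix x y z
    have "cmod (ip x (y + z)) = cmod (ip (y + z) x)" by (rule sym)
    also have "\<dots> \<le> cmod (ip y x) + cmod (ip z x)" by (rule add1)
    also have "\<dots> = cmod (ip x y) + cmod (ip x z)" by (simp only: sym[of x y] sym[of x z])
    finally show "cmod (ip x (y + z)) \<le> cmod (ip x y) + cmod (ip x z)" .
  qed
  show ?thesis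
  proof (intro exI[of _ M] conjI M1 ballI allI)
    fix \<alpha> :: real and x y z :: 'a and k :: complex
    assume a: "\<alpha> \<in> {0<..1}"
    let ?a = "A \<alpha>" and ?b = "B \<alpha>"
    have a0: "0 < ?a" and ab: "?a \<le> ?b" using AB a by auto
    have "?b / ?a \<le> C" unfolding C_def using sup a by (rule cSUP_upper2) simp
    hence "?b / ?a \<le> M" unfolding M_def by linarith
    hence bM: "?b \<le> M * ?a" using a0 by (simp add: field_simps)
    have lo: "\<And>u v. ?a * cmod (ip u v) \<le> cmod (ipa \<alpha> u v)"
      and hi: "\<And>u v. cmod (ipa \<alpha> u v) \<le> ?b * cmod (ip u v)" using bounds a by auto
    have k0: "cmod k \<ge> 0" by simp
    note U = key_up[OF a0 bM lo hi _ k0 M1 norm_ge_zero ab norm_ge_zero]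
    note U1 = key_up[where c=1, OF a0 bM lo hi _ zero_le_one M1 norm_ge_zero ab norm_ge_zero, simplified]
    note L = key_low[OF a0 bM hi lo _ k0 M1 ab norm_ge_zero]
    note L1 = key_low[where c=1, OF a0 bM hi lo _ zero_le_one M1 ab norm_ge_zero]
    show "cmod k / M * cmod (ipa \<alpha> x y) \<le> cmod (ipa \<alpha> (smul k x) y)" by (rule L) (simp add: sm1)
    show "cmod (ipa \<alpha> (smul k x) y) \<le> cmod k * M * cmod (ipa \<alpha> x y)" by (rule U) (simp add: sm1)
    show "cmod k / M * cmod (ipa \<alpha> x y) \<le> cmod (ipa \<alpha> x (smul k y))" by (rule L) (simp add: sm2)
    show "cmod (ipa \<alpha> x (smul k y)) \<le> cmod k * M * cmod (ipa \<alpha> x y)" by (rule U) (simp add: sm2)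
    show "cmod k / M * cmod (ipa \<alpha> y x) \<le> cmod (ipa \<alpha> (smul k x) y)" by (rule L) (simp add: sm1 sym[of x y])
    show "cmod (ipa \<alpha> (smul k x) y) \<le> cmod k * M * cmod (ipa \<alpha> y x)" by (rule U) (simp add: sm1 sym[of x y])
    show "cmod k / M * cmod (ipa \<alpha> y x) \<le> cmod (ipa \<alpha> x (smul k y))" by (rule L) (simp add: sm2 sym[of x y])
    show "cmod (ipa \<alpha> x (smul k y)) \<le> cmod k * M * cmod (ipa \<alpha> y x)" by (rule U) (simp add: sm2 sym[of x y])
    show "1 / M * cmod (ipa \<alpha> x (smul k y)) \<le> cmod (ipa \<alpha> (smul k x) y)" by (rule L1) (simp add: sm1 sm2)
    show "cmod (ipa \<alpha> (smul k x) y) \<le> M * cmod (ipa \<alpha> x (smul k y))" by (rule U1) (simp add: sm1 sm2)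
    show "1 / M * cmod (ipa \<alpha> (smul k x) y) \<le> cmod (ipa \<alpha> x (smul k y))" by (rule L1) (simp add: sm1 sm2)
    show "cmod (ipa \<alpha> x (smul k y)) \<le> M * cmod (ipa \<alpha> (smul k x) y)" by (rule U1) (simp add: sm1 sm2)
    show "1 / M * cmod (ipa \<alpha> (smul k y) x) \<le> cmod (ipa \<alpha> (smul k x) y)" by (rule L1) (simp add: sm1 sym[of x y])
    show "cmod (ipa \<alpha> (smul k x) y) \<le> M * cmod (ipa \<alpha> (smul k y) x)" by (rule U1) (simp add: sm1 sym[of x y])
    show "1 / M * cmod (ipa \<alpha> (smul k y) x) \<le> cmod (ipa \<alpha> x (smul k y))" by (rule L1) (simp add: sm1 sm2 sym[of x y])
    show "cmod (ipa \<alpha> x (smul k y)) \<le> M * cmod (ipa \<alpha> (smul k y) x)" by (rule U1) (simp add: sm1 sm2 sym[of x y])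
    show "cmod (ipa \<alpha> (smul k x + z) y) \<le> M * (cmod k * cmod (ipa \<alpha> x y) + cmod (ipa \<alpha> z y))"
      by (rule key_sum[OF a0 bM lo lo hi _ k0 M1 ab norm_ge_zero]) (use add1[of "smul k x" z y] sm1 in simp)
    show "cmod (ipa \<alpha> x (smul k y + z)) \<le> M * (cmod k * cmod (ipa \<alpha> x y) + cmod (ipa \<alpha> x z))"
      by (rule key_sum[OF a0 bM lo lo hi _ k0 M1 ab norm_ge_zero]) (use add2[of x "smul k y" z] sm2 in simp)
  qed
qed

end
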